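(* Let $x_*\in\Omega$, $R>0$, $c:=\|F(x_* )\|$, $\beta:=\|F'(x_* )^\dagger\|$, $\kappa:=\sup\{t\in[0,R):B(x_*,t)\subset\Omega\}$. Suppose $F'(x_* )^*F(x_* )=0$, $F'(x_* )$ is injective, and there exists $K>0$ with $$\alpha:=\sqrt2c\beta^2K<1,\qquad \|F'(x)-F'(y)\|\le K\|x-y\|\quad\forall\,x,y\in B(x_*,\kappa).$$ Take $0\le\vartheta<1$, $0\le\omega_2<\omega_1$ with $\omega_1(\alpha+\alpha\vartheta+\vartheta)+\omega_2<1$, and let $$r:=\min\Big\{\kappa,\ \frac{2(1-\omega_1\vartheta-\omega_2)-2\sqrt2cK\beta^2\omega_1(1+\vartheta)}{\beta K(2+\omega_1-\vartheta\omega_1-2\omega_2)}\Big\}.$$ Let $x_0\in B(x_*,r)\setminus\{x_*\}$ and $x_{k+1}=x_k+S_k$, $B(x_k)S_k=-F'(x_k)^*F(x_k)+r_k$, where for each $k$: $B(x_k):\mathbb X\to\mathbb X$ is invertible bounded linear with $\|B(x_k)^{-1}F'(x_k)^*F'(x_k)\|\le\omega_1$ and $\|B(x_k)^{-1}F'(x_k)^*F'(x_k)-I\|\le\omega_2$; $P_k:\mathbb X\to\mathbb X$ is invertible bounded linear; $\theta_k\ge0$, $r_k\in\mathbb X$ satisfy $\|P_kr_k\|\le\theta_k\|P_kF'(x_k)^*F(x_k)\|$ and $0\le\theta_k\,\mathrm{cond}(P_kF'(x_k)^*F'(x_k))\le\vartheta$. Then $\{x_k\}$ is well defined, contained in $B(x_*,r)$,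 converges to $x_*$, and for all $k\ge0$, $$\|x_{k+1}-x_*\|\le\frac{(1+\vartheta)\beta\omega_1K}{2(1-\beta K\|x_0-x_*\|)}\|x_k-x_*\|^2+\Big(\frac{(1+\vartheta)\omega_1\sqrt2c\beta^2K}{1-\beta K\|x_0-x_*\|}+\omega_1\vartheta+\omega_2\Big)\|x_k-x_*\|.$$
   Context: $\mathbb X,\mathbb Y$ are real or complex Hilbert spaces, $\Omega\subseteq\mathbb X$ is open, and $F:\Omega\to\mathbb Y$ is continuously differentiable with $F'(x)$ having closed image for every $x\in\Omega$. $A^*$ denotes the adjoint; for a continuous injective linear operator $A$ with closed image, $A^\dagger:=(A^*A)^{-1}A^*$. $\mathrm{cond}(A):=\|A\|\|A^{-1}\|$. $B(a,\delta)$ is the open ball. *)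

theory Defs
  imports "HOL-Analysis.Analysis"
begin

definition bl_adj :: "('a::real_inner \<Rightarrow>\<^sub>L 'b::real_inner) \<Rightarrow> ('b \<Rightarrow>\<^sub>L 'a)" where
  "bl_adj A = Blinfun (adjoint (blinfun_apply A))"

definition bl_invertible :: "('a::real_normed_vector \<Rightarrow>\<^sub>L 'b::real_normed_vector) \<Rightarrow> bool" where
  "bl_invertible A \<longleftrightarrow> (\<exists>B. A o\<^sub>L B = id_blinfun \<and> B o\<^sub>L A = id_blinfun)"

definition bl_inv :: "('a::real_normed_vector \<Rightarrow>\<^sub>L 'b::real_normed_vector) \<Rightarrow> ('b \<Rightarrow>\<^sub>L 'a)" where
  "bl_inv A = (SOME B. A o\<^sub>L B = id_blinfun \<and> B o\<^sub>L A = id_blinfun)"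

text \<open>Moore-Penrose pseudo-inverse of an injective operator with closed image:
  A^dagger = (A^* A)^{-1} A^*.\<close>
definition bl_pinv :: "('a::real_inner \<Rightarrow>\<^sub>L 'b::real_inner) \<Rightarrow> ('b \<Rightarrow>\<^sub>L 'a)" where
  "bl_pinv A = bl_inv (bl_adj A o\<^sub>L A) o\<^sub>L bl_adj A"

definition bl_cond :: "('a::real_normed_vector \<Rightarrow>\<^sub>L 'a) \<Rightarrow> ereal" where
  "bl_cond A = (if bl_invertible A then ereal (norm A * norm (bl_inv A)) else \<infinity>)"

end

theory Submission
  imports Defs
begin


lemma parallelogram_aux:
  fixes a b :: "'a::real_inner"
  shows "norm (a - b)^2 = 2 * norm a ^2 + 2 * norm b ^2 - 4 * norm ((a + b) /\<^sub>R 2)^2"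
  by (simp add: power2_norm_eq_inner inner_diff inner_add algebra_simps inner_commute)

lemma mid_aux: fixes u a b :: "'a::real_vector"
  shows "((u - a) + (u - b)) /\<^sub>R 2 = u - (a + b) /\<^sub>R 2"
proof -
  have "(u-a)+(u-b) = 2 *\<^sub>R (u - (a+b)/\<^sub>R 2)"
    by (simp add: scaleR_diff_right scaleR_2)
  thus ?thesis by simp
qed

lemma norm_diff_scale_sq: fixes w v :: "'a::real_inner" shows "norm (w - s *\<^sub>R v)^2 = norm w^2 - 2 * s * inner w v + s^2 * norm v^2"
  unfolding power2_norm_eq_inner by (simp add: inner_diff_left inner_diff_right inner_commute power2_eq_square algebra_simps)

lemma projection_exists:
  fixes V :: "'a::{real_inner,complete_space} set"
  assumes sub: "subspace V" and cl: "closed V"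
  shows "\<exists>p\<in>V. \<forall>v\<in>V. inner (u - p) v = 0"
proof -
  define N where "N = (\<lambda>v. norm (u - v)^2) ` V"
  define d where "d = Inf N"
  have "0 \<in> V" using sub by (simp add: subspace_0)
  hence Nne: "N \<noteq> {}" unfolding N_def by auto
  have bdd: "bdd_below N" unfolding N_def by (rule bdd_belowI[of _ 0]) auto
  have dle: "d \<le> norm (u - v)^2" if "v \<in> V" for v
    unfolding d_def N_def using bdd that by (auto intro!: cInf_lower simp: N_def)
  have "\<exists>v\<in>V. norm (u - v)^2 < d + 1 / (Suc n)" for n :: nat
  proof -
    have "Inf N < d + 1/Suc n" unfolding d_def by simp
    then obtain y where "y \<in> N" "y < d + 1/Suc n" using cInf_lessD[OF Nne] by blast
    thus ?thesis unfolding N_def by auto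
  qed
  then obtain w where w: "\<And>n. w n \<in> V" "\<And>n. norm (u - w n)^2 < d + 1 / Suc n" by metis
  have mid: "(w m + w n) /\<^sub>R 2 \<in> V" for m n
    using sub w(1) by (simp add: subspace_add subspace_scale)
  have key: "norm (w m - w n)^2 \<le> 2 / Suc m + 2 / Suc n" for m n
  proof -
    have "norm (w m - w n) = norm ((u - w n) - (u - w m))" by (simp add: norm_minus_commute)
    hence "norm (w m - w n)^2 = 2 * norm (u - w n)^2 + 2 * norm (u - w m)^2
           - 4 * norm (((u - w n) + (u - w m)) /\<^sub>R 2)^2"
      using parallelogram_aux by metis
    also have "((u - w n) + (u - w m)) /\<^sub>R 2 = u - (w m + w n) /\<^sub>R 2"
      using mid_aux[of u "w n" "w m"] by (simp add: add.commute)
    finally have e: "norm (w m - w n)^2 = 2 * norm (u - w n)^2 + 2 * norm (u - w m)^2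
           - 4 * norm (u - (w m + w n) /\<^sub>R 2)^2" .
    have "d \<le> norm (u - (w m + w n) /\<^sub>R 2)^2" using dle mid by blast
    with e w(2)[of m] w(2)[of n] show ?thesis by linarith
  qed
  have "Cauchy w"
  proof (rule metric_CauchyI)
    fix e :: real assume "e > 0"
    obtain M :: nat where M: "4 / e^2 < M" using reals_Archimedean2 by blast
    show "\<exists>M. \<forall>m\<ge>M. \<forall>n\<ge>M. dist (w m) (w n) < e"
    proof (intro exI allI impI)
      fix m n assume mn: "M \<le> m" "M \<le> n"
      have Mpos: "0 < real M" using M \<open>e>0\<close> by (smt (verit) divide_pos_pos zero_less_power)
      have "2 / Suc m \<le> 2 / M" using mn Mpos by (intro divide_left_mono) auto
      moreover have "2 / Suc n \<le> 2 / M" using mn Mpos by (intro divide_left_mono) auto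
      moreover have "4 / M < e^2" using M Mpos \<open>e>0\<close>
        by (metis divide_less_eq mult.commute zero_less_power pos_divide_less_eq)
      ultimately have "norm (w m - w n)^2 < e^2" using key[of m n] by linarith
      thus "dist (w m) (w n) < e" using \<open>e>0\<close> by (simp add: dist_norm power_less_imp_less_base)
    qed
  qed
  then obtain p where lim: "w \<longlonglongrightarrow> p" using complete_UNIV convergent_eq_Cauchy by blast
  have pV: "p \<in> V" using cl w(1) lim by (meson closed_sequentially)
  have "(\<lambda>n. norm (u - w n)^2) \<longlonglongrightarrow> norm (u - p)^2"
    by (intro tendsto_intros lim)
  moreover have "(\<lambda>n. d + 1 / Suc n) \<longlonglongrightarrow> d + 0"
    by (intro tendsto_intros LIMSEQ_inverse_real_of_nat[unfolded inverse_eq_divide])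
  ultimately have "norm (u - p)^2 \<le> d"
    using w(2) by (intro LIMSEQ_le[where X="\<lambda>n. norm (u - w n)^2" and Y="\<lambda>n. d + 1 / Suc n"]) 
       (auto intro: less_imp_le)
  hence pmin: "norm (u - p)^2 \<le> norm (u - v)^2" if "v \<in> V" for v using dle[OF that] by linarith
  show ?thesis
  proof (intro bexI[OF _ pV] ballI)
    fix v assume vV: "v \<in> V"
    define a where "a = inner (u - p) v"
    define s where "s = a / (norm v^2 + 1)"
    have "p + s *\<^sub>R v \<in> V" using sub pV vV by (simp add: subspace_add subspace_scale)
    hence "norm (u - p)^2 \<le> norm ((u - p) - s *\<^sub>R v)^2" using pmin by (metis diff_diff_eq)
    also have "\<dots> = norm (u - p)^2 - 2 * s * a + s^2 * norm v^2"
      unfolding a_def by (rule norm_diff_scale_sq)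
    finally have "2 * s * a \<le> s^2 * norm v^2" by simp
    moreover have "s^2 * norm v^2 = (s * a) * (norm v^2 / (norm v^2 + 1))"
      by (simp add: s_def field_simps power2_eq_square add_pos_nonneg)
    moreover have "norm v^2 / (norm v^2 + 1) < 1" by (simp add: add_pos_nonneg divide_less_eq) (smt (verit) zero_le_power2)
    moreover have "a \<noteq> 0 \<Longrightarrow> s * a > 0"
    proof -
      assume "a \<noteq> 0"
      hence "a * a > 0" by (simp add: zero_less_mult_iff linorder_neq_iff) blast
      moreover have "norm v^2 + 1 > 0" by (smt (verit) zero_le_power2)
      ultimately show "s * a > 0" by (simp add: s_def)
    qed
    ultimately have "a = 0"
    proof -
      assume h: "2 * s * a \<le> s\<^sup>2 * (norm v)\<^sup>2" "s\<^sup>2 * (norm v)\<^sup>2 = s * a * ((norm v)\<^sup>2 / ((norm v)\<^sup>2 + 1))"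
        "(norm v)\<^sup>2 / ((norm v)\<^sup>2 + 1) < 1" "a \<noteq> 0 \<Longrightarrow> 0 < s * a"
      show "a = 0"
      proof (rule ccontr)
        assume "a \<noteq> 0"
        hence sa: "s * a > 0" using h(4) by blast
        have "s * a * ((norm v)\<^sup>2 / ((norm v)\<^sup>2 + 1)) < s * a * 1"
          by (rule mult_strict_left_mono[OF h(3) sa])
        with h(1,2) sa show False by linarith
      qed
    qed
    thus "inner (u - p) v = 0" unfolding a_def by simp
  qed
qed




lemma riesz:
  fixes \<phi> :: "'a::{real_inner,complete_space} \<Rightarrow> real"
  assumes bl: "bounded_linear \<phi>"
  shows "\<exists>g. \<forall>x. \<phi> x = inner x g"
proof (cases "\<forall>x. \<phi> x = 0")
  case True thus ?thesis by (intro exI[of _ 0]) simp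
next
  case False
  then obtain u where u: "\<phi> u \<noteq> 0" by blast
  interpret bounded_linear \<phi> by fact
  define V where "V = {x. \<phi> x = 0}"
  have sub: "subspace V" unfolding V_def subspace_def by (simp add: add scaleR)
  have cl: "closed V" unfolding V_def
    by (intro closed_Collect_eq continuous_intros bl continuous_on_id)
       (simp add: linear_continuous_on bl)
  obtain p where p: "p \<in> V" "\<And>v. v \<in> V \<Longrightarrow> inner (u - p) v = 0"
    using projection_exists[OF sub cl, of u] by blast
  define w where "w = u - p"
  have pw: "\<phi> w = \<phi> u" using p(1) by (simp add: w_def V_def diff)
  hence wne: "w \<noteq> 0" using u by (auto simp: zero)
  show ?thesis
  proof (intro exI allI)
    fix x
    have "x - (\<phi> x / \<phi> w) *\<^sub>R w \<in> V" using pw u by (simp add: V_def diff scaleR)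
    hence "inner w (x - (\<phi> x / \<phi> w) *\<^sub>R w) = 0" using p(2) w_def by blast
    hence "inner w x = (\<phi> x / \<phi> w) * inner w w" by (simp add: inner_diff_right)
    hence "\<phi> x = inner x w * \<phi> w / inner w w" using wne pw u
      by (simp add: field_simps inner_commute)
    thus "\<phi> x = inner x ((\<phi> w / inner w w) *\<^sub>R w)" by simp
  qed
qed

lemma adjoint_property:
  fixes f :: "'a::{real_inner,complete_space} \<Rightarrow> 'b::real_inner"
  assumes bl: "bounded_linear f"
  shows "\<forall>x y. inner (f x) y = inner x (adjoint f y)"
proof -
  have "\<forall>y. \<exists>g. \<forall>x. inner (f x) y = inner x g"
  proof
    fix y
    have "bounded_linear (\<lambda>x. inner (f x) y)"
      by (intro bounded_linear_compose[OF bounded_linear_inner_left bl])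
    thus "\<exists>g. \<forall>x. inner (f x) y = inner x g" by (rule riesz)
  qed
  then obtain g where g: "\<forall>x y. inner (f x) y = inner x (g y)" by metis
  thus ?thesis unfolding adjoint_def by (rule someI[where P="\<lambda>f'. \<forall>x y. f x \<bullet> y = x \<bullet> f' y"])
qed

lemma inner_eq_right: "(\<forall>x. inner x a = inner x b) \<Longrightarrow> a = (b::'a::real_inner)"
  by (metis inner_diff_right diff_eq_diff_eq diff_self inner_eq_zero_iff)

lemma adjoint_bounded_linear:
  fixes f :: "'a::{real_inner,complete_space} \<Rightarrow> 'b::real_inner"
  assumes bl: "bounded_linear f"
  shows "bounded_linear (adjoint f)"
proof -
  note ad = adjoint_property[OF bl]
  interpret f: bounded_linear f by fact
  have lin: "linear (adjoint f)"
  proof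
    fix y z
    show "adjoint f (y + z) = adjoint f y + adjoint f z"
      by (rule inner_eq_right) (simp add: ad[rule_format, symmetric] inner_add_right)
    fix r :: real
    show "adjoint f (r *\<^sub>R y) = r *\<^sub>R adjoint f y"
      by (rule inner_eq_right) (simp add: ad[rule_format, symmetric])
  qed
  obtain C where C: "\<And>x. norm (f x) \<le> norm x * C" "C > 0" using f.pos_bounded by blast
  have "norm (adjoint f y) \<le> norm y * C" for y
  proof -
    have "norm (adjoint f y)^2 = inner (f (adjoint f y)) y"
      by (simp add: ad[rule_format] power2_norm_eq_inner)
    also have "\<dots> \<le> norm (f (adjoint f y)) * norm y" by (rule norm_cauchy_schwarz)
    also have "\<dots> \<le> norm (adjoint f y) * C * norm y" using C by (simp add: mult_right_mono)
    finally have "norm (adjoint f y) * norm (adjoint f y) \<le> norm (adjoint f y) * (norm y * C)"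
      by (simp add: power2_eq_square mult_ac)
    thus ?thesis using C(2) by (cases "adjoint f y = 0") auto
  qed
  with lin show ?thesis unfolding bounded_linear_def bounded_linear_axioms_def by (auto intro!: exI[of _ C])
qed

lemma bl_adj_apply:
  fixes A :: "'a::{real_inner,complete_space} \<Rightarrow>\<^sub>L 'b::real_inner"
  shows "blinfun_apply (bl_adj A) = adjoint (blinfun_apply A)"
  unfolding bl_adj_def by (rule bounded_linear_Blinfun_apply[OF adjoint_bounded_linear]) (rule blinfun.bounded_linear_right)

lemma bl_adj_inner:
  fixes A :: "'a::{real_inner,complete_space} \<Rightarrow>\<^sub>L 'b::real_inner"
  shows "inner (A x) y = inner x (bl_adj A y)"
  unfolding bl_adj_apply using adjoint_property[OF blinfun.bounded_linear_right, of A] by simp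



lemma baire_step:
  fixes T :: "'a::real_normed_vector \<Rightarrow> 'b::{real_normed_vector,complete_space}"
  assumes bl: "bounded_linear T" and cl: "closed (range T)"
  shows "\<exists>n::nat. \<exists>y0 \<in> closure (T ` cball 0 (real n)). \<exists>\<epsilon>>0.
           \<forall>y\<in>range T. dist y y0 < \<epsilon> \<longrightarrow> y \<in> closure (T ` cball 0 (real n))"
proof -
  interpret bounded_linear T by fact
  define Y where "Y = range T"
  define C where "C n = closure (T ` cball 0 (real n))" for n :: nat
  define X where "X = top_of_set Y"
  have CY: "C n \<subseteq> Y" for n unfolding C_def Y_def
    using cl by (simp add: closure_minimal image_mono)
  have cC: "closedin X (C n)" for n unfolding X_def
    using CY by (simp add: closedin_closed_Int[of "C n" Y, simplified] C_def Int_absorb2 closedin_closed)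
       (metis closed_closure inf.absorb_iff2 CY C_def)
  have UC: "\<Union>(range C) = Y"
  proof
    show "\<Union> (range C) \<subseteq> Y" using CY by blast
    show "Y \<subseteq> \<Union> (range C)"
    proof
      fix y assume "y \<in> Y"
      then obtain x where x: "y = T x" unfolding Y_def by blast
      obtain n :: nat where "norm x \<le> n" using real_arch_simple by blast
      hence "y \<in> C n" unfolding C_def using x by (auto intro!: closure_subset[THEN subsetD])
      thus "y \<in> \<Union> (range C)" by blast
    qed
  qed
  have cms: "completely_metrizable_space X" unfolding X_def
    by (rule completely_metrizable_space_closedin[OF completely_metrizable_space_euclidean])
       (simp add: Y_def cl)
  have "\<exists>n. X interior_of C n \<noteq> {}"
  proof (rule ccontr)
    assume "\<not> ?thesis"
    hence "X interior_of \<Union>(range C) = {}"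
      using cms cC by (intro Baire_category_alt) auto
    moreover have "X interior_of \<Union>(range C) = Y"
      using UC by (metis X_def interior_of_topspace topspace_euclidean_subtopology)
    moreover have "0 \<in> Y" unfolding Y_def using zero by (metis rangeI)
    ultimately show False by blast
  qed
  then obtain n y0 where y0: "y0 \<in> X interior_of C n" by blast
  have op: "openin X (X interior_of C n)" by simp
  then obtain \<epsilon> where e: "\<epsilon> > 0" "\<forall>y\<in>Y. dist y y0 < \<epsilon> \<longrightarrow> y \<in> X interior_of C n"
    using y0 unfolding X_def openin_euclidean_subtopology_iff by blast
  have "X interior_of C n \<subseteq> C n" by (rule interior_of_subset)
  thus ?thesis using y0 e unfolding C_def Y_def by blast
qed



lemma approx_inverse:
  fixes T :: "'a::real_normed_vector \<Rightarrow> 'b::{real_normed_vector,complete_space}"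
  assumes bl: "bounded_linear T" and cl: "closed (range T)"
  shows "\<exists>M\<ge>0. \<forall>y\<in>range T. \<forall>\<delta>>0. \<exists>x. norm x \<le> M * norm y \<and> norm (T x - y) < \<delta>"
proof -
  interpret bounded_linear T by fact
  obtain n :: nat and y0 \<epsilon> where y0: "y0 \<in> closure (T ` cball 0 (real n))" and e: "\<epsilon> > 0"
    and ball: "\<forall>y\<in>range T. dist y y0 < \<epsilon> \<longrightarrow> y \<in> closure (T ` cball 0 (real n))"
    using baire_step[OF bl cl] by blast
  have y0R: "y0 \<in> range T" using y0 cl by (meson closure_minimal image_subsetI rangeI subsetD)
  have A: "\<exists>x. norm x \<le> 2 * n \<and> norm (T x - y) < \<delta>" if y: "y \<in> range T" "norm y < \<epsilon>" and d: "\<delta> > 0" for y \<delta>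
  proof -
    obtain a0 b0 where "y0 = T a0" "y = T b0" using y y0R by blast
    hence "y0 + y = T (a0 + b0)" by (simp add: add)
    hence "y0 + y \<in> range T" by blast
    moreover have "dist (y0 + y) y0 < \<epsilon>" using y by (simp add: dist_norm)
    ultimately have "y0 + y \<in> closure (T ` cball 0 (real n))" using ball by blast
    then obtain a where a: "a \<in> cball 0 (real n)" "dist (T a) (y0 + y) < \<delta>/2"
      using d unfolding closure_approachable by (metis half_gt_zero image_iff)
    obtain b where b: "b \<in> cball 0 (real n)" "dist (T b) y0 < \<delta>/2"
      using d y0 unfolding closure_approachable by (metis half_gt_zero image_iff)
    have "norm (a - b) \<le> norm a + norm b" by (rule norm_triangle_ineq4)
    also have "\<dots> \<le> 2 * n" using a b by simp
    finally have 1: "norm (a - b) \<le> 2 * n" .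
    have "T (a - b) - y = (T a - (y0 + y)) - (T b - y0)" by (simp add: diff algebra_simps)
    hence "norm (T (a - b) - y) \<le> dist (T a) (y0 + y) + dist (T b) y0"
      by (metis dist_norm norm_triangle_ineq4)
    with a b have "norm (T (a - b) - y) < \<delta>" by linarith
    with 1 show ?thesis by blast
  qed
  show ?thesis
  proof (rule exI[of _ "4 * real n / \<epsilon>"], intro conjI ballI allI impI)
    show "0 \<le> 4 * real n / \<epsilon>" using e by simp
    fix y \<delta> assume y: "y \<in> range T" and d: "(\<delta>::real) > 0"
    show "\<exists>x. norm x \<le> 4 * real n / \<epsilon> * norm y \<and> norm (T x - y) < \<delta>"
    proof (cases "y = 0")
      case True thus ?thesis using d by (intro exI[of _ 0]) (simp add: zero)
    next
      case False
      define s where "s = \<epsilon> / (2 * norm y)"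
      have s: "s > 0" using False e by (simp add: s_def)
      have "s *\<^sub>R y \<in> range T" using y by (metis rangeE rangeI scaleR)
      moreover have "norm (s *\<^sub>R y) < \<epsilon>" using s e False by (simp add: s_def)
      ultimately obtain x' where x': "norm x' \<le> 2 * n" "norm (T x' - s *\<^sub>R y) < s * \<delta>"
        using A s d by (meson mult_pos_pos)
      define x where "x = x' /\<^sub>R s"
      have "norm x = norm x' / s" using s by (simp add: x_def divide_inverse_commute)
      also have "\<dots> \<le> 2 * n / s" using x' s by (simp add: divide_right_mono)
      also have "\<dots> = 4 * real n / \<epsilon> * norm y" using False e by (simp add: s_def field_simps)
      finally have 1: "norm x \<le> 4 * real n / \<epsilon> * norm y" .
      have "T x - y = (T x' - s *\<^sub>R y) /\<^sub>R s" using s by (simp add: x_def scaleR algebra_simps)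
      hence "norm (T x - y) = norm (T x' - s *\<^sub>R y) / s" using s by (simp add: divide_inverse_commute)
      also have "\<dots> < \<delta>" using x' s by (simp add: divide_less_eq mult.commute)
      finally show ?thesis using 1 by blast
    qed
  qed
qed



lemma summable_norm_cancel':
  fixes f :: "nat \<Rightarrow> 'a::{real_normed_vector,complete_space}"
  assumes sn: "summable (\<lambda>n. norm (f n))"
  shows "summable f"
proof -
  have "Cauchy (\<lambda>n. sum f {..<n})"
  proof (rule metric_CauchyI)
    fix e :: real assume e: "e > 0"
    obtain N where N: "\<forall>m\<ge>N. \<forall>n. norm (sum (\<lambda>k. norm (f k)) {m..<n}) < e"
      using sn[unfolded summable_Cauchy] e by blast
    have *: "dist (sum f {..<m}) (sum f {..<n}) < e" if "N \<le> m" "m \<le> n" for m n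
    proof -
      have "sum f {..<n} - sum f {..<m} = sum f {m..<n}" using that
        by (metis sum_diff_nat_ivl lessThan_atLeast0 zero_le)
      hence "dist (sum f {..<m}) (sum f {..<n}) = norm (sum f {m..<n})"
        by (metis dist_norm dist_commute)
      also have "\<dots> \<le> sum (\<lambda>k. norm (f k)) {m..<n}" by (rule norm_sum)
      also have "\<dots> \<le> norm (sum (\<lambda>k. norm (f k)) {m..<n})" by simp
      also have "\<dots> < e" using N that by blast
      finally show ?thesis .
    qed
    show "\<exists>M. \<forall>m\<ge>M. \<forall>n\<ge>M. dist (sum f {..<m}) (sum f {..<n}) < e"
    proof (intro exI allI impI)
      fix m n assume "N \<le> m" "N \<le> n"
      thus "dist (sum f {..<m}) (sum f {..<n}) < e"
        using *[of m n] *[of n m] by (cases "m \<le> n") (auto simp: dist_commute)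
    qed
  qed
  then obtain s where "(\<lambda>n. sum f {..<n}) \<longlonglongrightarrow> s" using complete_UNIV convergent_eq_Cauchy by blast
  thus ?thesis unfolding summable_def sums_def by blast
qed

lemma summable_norm':
  fixes f :: "nat \<Rightarrow> 'a::{real_normed_vector,complete_space}"
  shows "summable (\<lambda>n. norm (f n)) \<Longrightarrow> norm (suminf f) \<le> (\<Sum>n. norm (f n))"
proof -
  assume sn: "summable (\<lambda>n. norm (f n))"
  have "(\<lambda>n. norm (\<Sum>i<n. f i)) \<longlonglongrightarrow> norm (suminf f)"
    by (intro tendsto_norm summable_LIMSEQ summable_norm_cancel'[OF sn])
  moreover have "(\<lambda>n. \<Sum>i<n. norm (f i)) \<longlonglongrightarrow> (\<Sum>n. norm (f n))"
    by (rule summable_LIMSEQ[OF sn])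
  ultimately show ?thesis by (rule LIMSEQ_le) (auto intro: norm_sum)
qed

lemma bounded_below_closed_range:
  fixes T :: "'a::{real_normed_vector,complete_space} \<Rightarrow> 'b::{real_normed_vector,complete_space}"
  assumes bl: "bounded_linear T" and inj: "inj T" and cl: "closed (range T)"
  shows "\<exists>m>0. \<forall>x. m * norm x \<le> norm (T x)"
proof -
  interpret bounded_linear T by fact
  obtain M where M: "M \<ge> 0" "\<forall>y\<in>range T. \<forall>\<delta>>0. \<exists>x. norm x \<le> M * norm y \<and> norm (T x - y) < \<delta>"
    using approx_inverse[OF bl cl] by blast
  have "\<forall>y \<delta>. \<exists>x. y \<in> range T \<longrightarrow> \<delta> > 0 \<longrightarrow> norm x \<le> M * norm y \<and> norm (T x - y) < \<delta>"
    using M(2) by blast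
  then obtain g where g: "\<And>y \<delta>. y \<in> range T \<Longrightarrow> \<delta> > 0 \<Longrightarrow> norm (g y \<delta>) \<le> M * norm y \<and> norm (T (g y \<delta>) - y) < \<delta>"
    by metis
  have main: "norm x0 \<le> 2 * M * norm (T x0)" for x0
  proof (cases "T x0 = 0")
    case True
    hence "x0 = 0" using inj zero by (metis injD)
    thus ?thesis by simp
  next
    case False
    define y where "y = T x0"
    define c where "c = norm y"
    have c: "c > 0" using False by (simp add: c_def y_def)
    define ys where "ys = rec_nat y (\<lambda>k z. z - T (g z (c * (1/2)^Suc k)))"
    have ys0: "ys 0 = y" by (simp add: ys_def)
    have ysS: "ys (Suc k) = ys k - T (g (ys k) (c * (1/2)^Suc k))" for k by (simp add: ys_def)
    have inv: "ys k \<in> range T \<and> norm (ys k) \<le> c * (1/2)^k" for k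
    proof (induction k)
      case 0 thus ?case by (simp add: ys0 c_def y_def)
    next
      case (Suc k)
      then obtain a where a: "ys k = T a" by blast
      have "ys (Suc k) = T (a - g (ys k) (c * (1/2)^Suc k))" by (simp add: ysS a diff)
      moreover have "norm (ys (Suc k)) \<le> c * (1/2)^Suc k"
      proof -
        have "norm (T (g (ys k) (c * (1/2)^Suc k)) - ys k) < c * (1/2)^Suc k"
          using g[of "ys k" "c * (1/2)^Suc k"] Suc c by simp
        thus ?thesis by (simp add: ysS norm_minus_commute)
      qed
      ultimately show ?case by blast
    qed
    define xk where "xk k = g (ys k) (c * (1/2)^Suc k)" for k
    have xkb: "norm (xk k) \<le> (M * c) * (1/2)^k" for k
    proof -
      have "norm (xk k) \<le> M * norm (ys k)" using g[of "ys k" "c * (1/2)^Suc k"] inv[of k] c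
        by (simp add: xk_def)
      also have "\<dots> \<le> M * (c * (1/2)^k)" using inv[of k] M(1) by (simp add: mult_left_mono)
      finally show ?thesis by simp
    qed
    have sg: "summable (\<lambda>k. (M * c) * (1/2::real)^k)" by (intro summable_mult summable_geometric) simp
    have sn: "summable (\<lambda>k. norm (xk k))"
      by (rule summable_comparison_test'[OF sg]) (use xkb in simp)
    have s: "summable xk" by (rule summable_norm_cancel'[OF sn])
    have "norm (suminf xk) \<le> (\<Sum>k. norm (xk k))" by (rule summable_norm'[OF sn])
    also have "\<dots> \<le> (\<Sum>k. (M * c) * (1/2::real)^k)" by (rule suminf_le[OF xkb sn sg])
    also have "\<dots> = 2 * M * c" using suminf_geometric[of "1/2::real"]
      by (simp add: suminf_mult)
    finally have nb: "norm (suminf xk) \<le> 2 * M * c" .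
    have Txk: "T (xk k) = ys k - ys (Suc k)" for k by (simp add: ysS xk_def)
    have "ys \<longlonglongrightarrow> 0"
    proof (rule Lim_null_comparison)
      show "\<forall>\<^sub>F k in sequentially. norm (ys k) \<le> c * (1/2)^k" using inv by simp
      show "(\<lambda>k. c * (1/2::real)^k) \<longlonglongrightarrow> 0"
        by (intro tendsto_mult_right_zero LIMSEQ_realpow_zero) auto
    qed
    hence "(\<lambda>k. ys k - ys (Suc k)) sums (ys 0 - 0)" by (rule telescope_sums')
    hence "(\<lambda>k. T (xk k)) sums y" by (simp add: Txk ys0)
    moreover have "T (suminf xk) = (\<Sum>k. T (xk k))" by (rule suminf[OF s])
    ultimately have "T (suminf xk) = T x0" by (simp add: sums_iff y_def)
    hence "suminf xk = x0" using inj by (meson injD)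
    thus ?thesis using nb by (simp add: c_def y_def)
  qed
  show ?thesis
  proof (intro exI[of _ "1 / (2 * M + 1)"] conjI allI)
    show "0 < 1 / (2 * M + 1)" using M by simp
    fix x
    have "norm x \<le> 2 * M * norm (T x) + norm (T x)" using main[of x] norm_ge_zero[of "T x"]
      by linarith
    hence "norm x \<le> (2 * M + 1) * norm (T x)" by (simp add: algebra_simps)
    thus "1 / (2 * M + 1) * norm x \<le> norm (T x)" using M
      by (simp add: field_simps)
  qed
qed



lemma bounded_below_closed:
  fixes T :: "'a::{real_normed_vector,complete_space} \<Rightarrow> 'b::real_normed_vector"
  assumes bl: "bounded_linear T" and m: "m > 0" and bb: "\<forall>x. m * norm x \<le> norm (T x)"
  shows "closed (range T)"
proof -
  interpret bounded_linear T by fact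
  show ?thesis
  proof (rule closed_sequential_limits[THEN iffD2], intro allI impI, elim conjE)
    fix s l assume sr: "\<forall>n. s n \<in> range T" and lim: "s \<longlonglongrightarrow> l"
    have "\<forall>n. \<exists>y. s n = T y" using sr by blast
    then obtain x where x0: "\<forall>n. s n = T (x n)" by (auto simp: choice_iff)
    hence x: "\<And>n. s n = T (x n)" by blast
    have "Cauchy s" using lim by (rule LIMSEQ_imp_Cauchy)
    have "Cauchy x"
    proof (rule metric_CauchyI)
      fix e :: real assume e: "e > 0"
      obtain N where N: "\<forall>p\<ge>N. \<forall>q\<ge>N. dist (s p) (s q) < m * e"
        using \<open>Cauchy s\<close> m e by (meson metric_CauchyD mult_pos_pos)
      show "\<exists>N. \<forall>p\<ge>N. \<forall>q\<ge>N. dist (x p) (x q) < e"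
      proof (intro exI allI impI)
        fix p q assume "N \<le> p" "N \<le> q"
        hence "norm (T (x p - x q)) < m * e" using N by (simp add: x dist_norm diff)
        moreover have "m * norm (x p - x q) \<le> norm (T (x p - x q))" using bb by blast
        ultimately have "m * norm (x p - x q) < m * e" by linarith
        thus "dist (x p) (x q) < e" using m by (simp add: dist_norm)
      qed
    qed
    then obtain a where a: "x \<longlonglongrightarrow> a" using complete_UNIV convergent_eq_Cauchy by blast
    have "(\<lambda>n. T (x n)) \<longlonglongrightarrow> T a" by (intro tendsto a)
    moreover have "s = (\<lambda>n. T (x n))" using x by blast
    ultimately have "s \<longlonglongrightarrow> T a" by simp
    hence "l = T a" by (rule LIMSEQ_unique[OF lim])
    thus "l \<in> range T" by blast
  qed
qed

lemma adj_comp_invertible: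
  fixes D :: "'a::{real_inner,complete_space} \<Rightarrow>\<^sub>L 'b::{real_inner,complete_space}"
  assumes inj: "inj (blinfun_apply D)" and cl: "closed (range (blinfun_apply D))"
  shows "bl_invertible (bl_adj D o\<^sub>L D)"
proof -
  obtain m where m: "m > 0" "\<forall>x. m * norm x \<le> norm (D x)"
    using bounded_below_closed_range[OF blinfun.bounded_linear_right inj cl] by blast
  define T where "T = bl_adj D o\<^sub>L D"
  have Tin: "inner (T x) z = inner (D x) (D z)" for x z
  proof -
    have "inner (T x) z = inner z (bl_adj D (D x))" by (simp add: T_def inner_commute)
    also have "\<dots> = inner (D z) (D x)" by (rule bl_adj_inner[symmetric])
    finally show ?thesis by (simp add: inner_commute)
  qed
  have Tbb: "m^2 * norm x \<le> norm (T x)" for x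
  proof -
    have "m^2 * norm x * norm x = (m * norm x)^2" by (simp add: power2_eq_square)
    also have "\<dots> \<le> norm (D x)^2" using m by (simp add: power_mono)
    also have "\<dots> = inner (T x) x" by (simp add: Tin power2_norm_eq_inner)
    also have "\<dots> \<le> norm (T x) * norm x" by (rule norm_cauchy_schwarz)
    finally show ?thesis by (cases "x = 0") auto
  qed
  have m2: "m^2 > 0" using m by simp
  have clT: "closed (range T)"
    by (rule bounded_below_closed[OF blinfun.bounded_linear_right m2]) (use Tbb in blast)
  have subT: "subspace (range T)" unfolding subspace_def
  proof (intro conjI ballI allI)
    show "0 \<in> range T" by (metis blinfun.zero_right rangeI)
    fix x y assume "x \<in> range T" "y \<in> range T"
    then obtain a b where "x = T a" "y = T b" by blast
    hence "x + y = T (a + b)" by (simp add: blinfun.add_right)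
    thus "x + y \<in> range T" by blast
  next
    fix c :: real and x assume "x \<in> range T"
    then obtain a where "x = T a" by blast
    hence "c *\<^sub>R x = T (c *\<^sub>R a)" by (simp add: blinfun.scaleR_right)
    thus "c *\<^sub>R x \<in> range T" by blast
  qed
  have surj: "surj T"
  proof -
    have "y \<in> range T" for y
    proof -
      obtain p where p: "p \<in> range T" "\<And>v. v \<in> range T \<Longrightarrow> inner (y - p) v = 0"
        using projection_exists[OF subT clT] by blast
      have "inner (y - p) (T (y - p)) = 0" using p(2) by blast
      hence "inner (T (y - p)) (y - p) = 0" by (simp add: inner_commute)
      hence "norm (D (y - p))^2 = 0" unfolding Tin power2_norm_eq_inner .
      hence "m * norm (y - p) \<le> 0" using m(2) by (metis norm_eq_zero power_eq_0_iff order_refl)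
      hence "y = p" using m by (simp add: mult_le_0_iff)
      thus ?thesis using p by simp
    qed
    thus ?thesis by blast
  qed
  have injT: "inj T"
  proof (rule injI)
    fix a b assume "T a = T b"
    hence "T (a - b) = 0" by (simp add: blinfun.diff_right)
    hence "m^2 * norm (a - b) \<le> 0" using Tbb by (metis norm_zero)
    thus "a = b" using m2 by (simp add: mult_le_0_iff)
  qed
  define S where "S = inv (blinfun_apply T)"
  have TS: "T (S y) = y" for y using surj by (simp add: S_def surj_f_inv_f)
  have ST: "S (T x) = x" for x using injT by (simp add: S_def)
  have linS: "linear S"
  proof
    fix a b
    have "T (S a + S b) = a + b" by (simp add: blinfun.add_right TS)
    thus "S (a + b) = S a + S b" by (metis ST)
  next
    fix c :: real and a
    have "T (c *\<^sub>R S a) = c *\<^sub>R a" by (simp add: blinfun.scaleR_right TS)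
    thus "S (c *\<^sub>R a) = c *\<^sub>R S a" by (metis ST)
  qed
  have "bounded_linear S"
  proof -
    have "norm (S y) \<le> norm y * (1 / m^2)" for y
      using Tbb[of "S y"] m2 by (simp add: TS field_simps)
    with linS show ?thesis unfolding bounded_linear_def bounded_linear_axioms_def by blast
  qed
  hence Sapp: "blinfun_apply (Blinfun S) = S" by (rule bounded_linear_Blinfun_apply)
  have "T o\<^sub>L Blinfun S = id_blinfun \<and> Blinfun S o\<^sub>L T = id_blinfun"
    by (auto intro!: blinfun_eqI simp: Sapp TS ST)
  thus ?thesis unfolding bl_invertible_def T_def by blast
qed



lemma bl_inv_props:
  assumes "bl_invertible A"
  shows "A o\<^sub>L bl_inv A = id_blinfun" "bl_inv A o\<^sub>L A = id_blinfun"
proof -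
  have "\<exists>B. A o\<^sub>L B = id_blinfun \<and> B o\<^sub>L A = id_blinfun" using assms by (simp add: bl_invertible_def)
  hence "A o\<^sub>L bl_inv A = id_blinfun \<and> bl_inv A o\<^sub>L A = id_blinfun" unfolding bl_inv_def by (rule someI_ex)
  thus "A o\<^sub>L bl_inv A = id_blinfun" "bl_inv A o\<^sub>L A = id_blinfun" by auto
qed

lemma bl_inv_apply:
  assumes "bl_invertible A"
  shows "A (bl_inv A y) = y" "bl_inv A (A x) = x"
proof -
  have "(A o\<^sub>L bl_inv A) y = y" using bl_inv_props(1)[OF assms] by simp
  thus "A (bl_inv A y) = y" by simp
  have "(bl_inv A o\<^sub>L A) x = x" using bl_inv_props(2)[OF assms] by simp
  thus "bl_inv A (A x) = x" by simp
qed

lemma solver: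
  fixes A :: "'a::{real_inner,complete_space} \<Rightarrow>\<^sub>L 'b::{real_inner,complete_space}"
  assumes B: "bl_invertible B" and om: "norm ((bl_inv B o\<^sub>L bl_adj A o\<^sub>L A) - id_blinfun) \<le> \<omega>"
    and om1: "\<omega> < 1"
  shows "\<exists>z. bl_adj A (A z) = y"
proof -
  define M where "M = bl_inv B o\<^sub>L bl_adj A o\<^sub>L A"
  define u where "u = bl_inv B y"
  define f where "f z = u - (M z - z)" for z
  have om0: "0 \<le> \<omega>" using om norm_ge_zero order_trans by blast
  have "\<exists>!z\<in>UNIV. f z = z"
  proof (rule Banach_fix[OF complete_UNIV _ om0 om1])
    show "f ` UNIV \<subseteq> UNIV" by simp
    fix a b :: 'a
    have "f a - f b = - ((M - id_blinfun) (a - b))"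
      by (simp add: f_def blinfun.diff_right blinfun.diff_left algebra_simps)
    hence "dist (f a) (f b) = norm ((M - id_blinfun) (a - b))" by (simp add: dist_norm)
    also have "\<dots> \<le> norm (M - id_blinfun) * norm (a - b)" by (rule norm_blinfun)
    also have "\<dots> \<le> \<omega> * dist a b" using om unfolding M_def dist_norm
      by (simp add: mult_right_mono)
    finally show "dist (f a) (f b) \<le> \<omega> * dist a b" .
  qed simp
  then obtain z where "f z = z" by blast
  hence Mz: "M z = u" by (simp add: f_def)
  have "bl_adj A (A z) = B (M z)" unfolding M_def by (simp add: bl_inv_apply[OF B])
  also have "\<dots> = y" by (simp add: Mz u_def bl_inv_apply[OF B])
  finally show ?thesis by blast
qed

lemma normal_eq_orth:
  fixes A :: "'a::{real_inner,complete_space} \<Rightarrow>\<^sub>L 'b::{real_inner,complete_space}"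
  assumes "bl_adj A (A z) = bl_adj A w"
  shows "inner (A v) (A z - w) = 0"
proof -
  have "inner (A v) (A z - w) = inner v (bl_adj A (A z - w))" by (rule bl_adj_inner)
  also have "\<dots> = 0" using assms by (simp add: blinfun.diff_right)
  finally show ?thesis .
qed

lemma L1:
  fixes A D :: "'a::real_inner \<Rightarrow>\<^sub>L 'b::real_inner"
  assumes Db: "\<forall>z. norm z \<le> \<beta> * norm (D z)" and b0: "\<beta> \<ge> 0"
    and AD: "norm (A - D) \<le> \<delta>" and t: "\<beta> * \<delta> < 1"
    and orth: "inner (A z) (A z - w) = 0"
  shows "norm z \<le> \<beta> * norm w / (1 - \<beta> * \<delta>)"
proof -
  have "norm (A z)^2 = inner (A z) w" using orth
    by (simp add: power2_norm_eq_inner inner_diff_right)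
  also have "\<dots> \<le> norm (A z) * norm w" by (rule norm_cauchy_schwarz)
  finally have "norm (A z) * norm (A z) \<le> norm (A z) * norm w" by (simp add: power2_eq_square)
  hence Az: "norm (A z) \<le> norm w" by (cases "A z = 0") auto
  have "D z = A z - (A - D) z" by (simp add: blinfun.diff_left)
  hence "norm (D z) \<le> norm (A z) + norm ((A - D) z)" by (metis norm_triangle_ineq4)
  also have "norm ((A - D) z) \<le> norm (A - D) * norm z" by (rule norm_blinfun)
  also have "\<dots> \<le> \<delta> * norm z" using AD by (simp add: mult_right_mono)
  finally have "norm (D z) \<le> norm w + \<delta> * norm z" using Az by linarith
  hence "\<beta> * norm (D z) \<le> \<beta> * (norm w + \<delta> * norm z)" using b0 by (simp add: mult_left_mono)
  hence "norm z \<le> \<beta> * norm w + (\<beta> * \<delta>) * norm z" using Db by (simp add: algebra_simps) (smt (verit))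
  hence "norm z * (1 - \<beta> * \<delta>) \<le> \<beta> * norm w" by (simp add: algebra_simps)
  thus ?thesis using t by (simp add: field_simps)
qed

lemma L2:
  fixes A D :: "'a::real_inner \<Rightarrow>\<^sub>L 'b::real_inner"
  assumes Db: "\<forall>z. norm z \<le> \<beta> * norm (D z)" and b0: "\<beta> \<ge> 0"
    and AD: "norm (A - D) \<le> \<delta>" and t: "\<beta> * \<delta> < 1" and d0: "\<delta> \<ge> 0"
    and orth: "inner (A z) (A z - w) = 0"
    and orthD: "inner (D z) w = 0"
  shows "norm z \<le> \<beta> * (\<beta> * \<delta> * norm w) / (1 - \<beta> * \<delta>)"
proof -
  define p where "p = norm (D z)"
  define q where "q = norm z"
  have qp: "q \<le> \<beta> * p" using Db by (simp add: p_def q_def)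
  have Adz: "norm ((A - D) z) \<le> \<delta> * q"
    using norm_blinfun[of "A - D" z] AD by (smt (verit) mult_right_mono norm_ge_zero q_def)
  have wn: "norm (A z - w) \<le> norm w"
  proof -
    have "norm w ^2 = norm (A z)^2 + norm (A z - w)^2"
    proof -
      have e: "norm (A z - 1 *\<^sub>R (A z - w))^2 = norm (A z)^2 - 2 * 1 * inner (A z) (A z - w) + 1^2 * norm (A z - w)^2"
        by (rule norm_diff_scale_sq)
      have "A z - 1 *\<^sub>R (A z - w) = w" by simp
      with e have "norm w^2 = norm (A z)^2 - 2 * 1 * inner (A z) (A z - w) + 1^2 * norm (A z - w)^2" by metis
      thus ?thesis using orth by (simp only: power_one mult_1 mult_1_right)
    qed
    hence "norm (A z - w)^2 \<le> norm w ^2" using zero_le_power2[of "norm (A z)"] by linarith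
    thus ?thesis by (rule power2_le_imp_le) simp
  qed
  have "inner (D z) (A z) = inner (D z) (A z - w)" using orthD by (simp add: inner_diff_right)
  also have "\<dots> = inner (D z - A z) (A z - w)" using orth by (simp add: inner_diff_left)
  also have "\<dots> = - inner ((A - D) z) (A z - w)" by (simp add: blinfun.diff_left inner_diff_left)
  also have "\<dots> \<le> norm ((A - D) z) * norm (A z - w)"
    using norm_cauchy_schwarz[of "(A - D) z" "A z - w"] Cauchy_Schwarz_ineq2[of "(A - D) z" "A z - w"] by linarith
  also have "\<dots> \<le> (\<delta> * q) * norm w"
    using Adz wn by (simp add: mult_mono d0 q_def)
  finally have i1: "inner (D z) (A z) \<le> \<delta> * q * norm w" .
  have e2: "p^2 = inner (D z) (A z) - inner (D z) ((A - D) z)"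
    by (simp add: p_def power2_norm_eq_inner blinfun.diff_left inner_diff_right)
  have i2: "- inner (D z) ((A - D) z) \<le> p * (\<delta> * q)"
    using Cauchy_Schwarz_ineq2[of "D z" "(A - D) z"] Adz norm_ge_zero[of "D z"]
    by (smt (verit) mult_left_mono p_def)
  have "p^2 \<le> \<delta> * q * norm w + p * (\<delta> * q)" using e2 i1 i2 by linarith
  also have "\<dots> \<le> \<delta> * (\<beta> * p) * norm w + p * (\<delta> * (\<beta> * p))"
  proof -
    have "\<delta> * q \<le> \<delta> * (\<beta> * p)" using qp d0 by (rule mult_left_mono)
    hence a1: "\<delta> * q * norm w \<le> \<delta> * (\<beta> * p) * norm w" by (rule mult_right_mono) simp
    have a2: "p * (\<delta> * q) \<le> p * (\<delta> * (\<beta> * p))"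
      using \<open>\<delta> * q \<le> \<delta> * (\<beta> * p)\<close> by (rule mult_left_mono) (simp add: p_def)
    from a1 a2 show ?thesis by linarith
  qed
  finally have "p * p \<le> p * ((\<beta> * \<delta>) * norm w + (\<beta> * \<delta>) * p)"
    by (simp add: power2_eq_square algebra_simps)
  hence "p \<le> (\<beta> * \<delta>) * norm w + (\<beta> * \<delta>) * p"
    using b0 d0 by (cases "p = 0") (auto simp: p_def)
  hence "p * (1 - \<beta> * \<delta>) \<le> \<beta> * \<delta> * norm w" by (simp add: algebra_simps)
  hence "p \<le> \<beta> * \<delta> * norm w / (1 - \<beta> * \<delta>)" using t by (simp add: field_simps)
  hence "\<beta> * p \<le> \<beta> * (\<beta> * \<delta> * norm w / (1 - \<beta> * \<delta>))" using b0 by (rule mult_left_mono)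
  thus ?thesis using qp by (simp add: q_def)
qed



lemma resid_lemma:
  fixes A :: "'a::{real_inner,complete_space} \<Rightarrow>\<^sub>L 'b::{real_inner,complete_space}"
    and P :: "'a \<Rightarrow>\<^sub>L 'a"
  assumes P: "bl_invertible P" and th0: "\<theta> \<ge> 0" and Th0: "\<Theta> \<ge> 0"
    and res: "norm (P r) \<le> \<theta> * norm (P (bl_adj A (A zF)))"
    and cond: "ereal \<theta> * bl_cond (P o\<^sub>L bl_adj A o\<^sub>L A) \<le> ereal \<Theta>"
  shows "\<exists>zr. bl_adj A (A zr) = r \<and> norm zr \<le> \<Theta> * norm zF"
proof (cases "\<theta> = 0")
  case True
  hence "P r = 0" using res by simp
  hence "r = 0" using bl_inv_apply(2)[OF P, of r] by (simp add: blinfun.zero_right)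
  thus ?thesis using Th0 by (intro exI[of _ 0]) (simp add: blinfun.zero_right)
next
  case False
  hence thp: "\<theta> > 0" using th0 by simp
  define T where "T = P o\<^sub>L bl_adj A o\<^sub>L A"
  have Tinv: "bl_invertible T"
  proof (rule ccontr)
    assume "\<not> bl_invertible T"
    hence "bl_cond T = \<infinity>" by (simp add: bl_cond_def)
    hence inf: "ereal \<theta> * bl_cond T = \<infinity>" using thp by simp
    have "ereal \<theta> * bl_cond T \<le> ereal \<Theta>" using cond by (simp add: T_def)
    hence "\<infinity> \<le> ereal \<Theta>" by (simp only: inf)
    thus False by simp
  qed
  have "ereal \<theta> * ereal (norm T * norm (bl_inv T)) \<le> ereal \<Theta>"
    using cond Tinv by (simp add: T_def bl_cond_def)
  hence cb: "\<theta> * (norm T * norm (bl_inv T)) \<le> \<Theta>" by simp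
  define zr where "zr = bl_inv T (P r)"
  have "T zr = P r" by (simp add: zr_def bl_inv_apply(1)[OF Tinv])
  hence "P (bl_adj A (A zr)) = P r" by (simp add: T_def)
  hence e: "bl_adj A (A zr) = r" by (metis bl_inv_apply(2)[OF P])
  have "norm zr \<le> norm (bl_inv T) * norm (P r)" unfolding zr_def by (rule norm_blinfun)
  also have "\<dots> \<le> norm (bl_inv T) * (\<theta> * norm (T zF))"
    using res by (intro mult_left_mono) (simp_all add: T_def)
  also have "\<dots> \<le> norm (bl_inv T) * (\<theta> * (norm T * norm zF))"
    using th0 by (intro mult_left_mono norm_blinfun) simp_all
  also have "\<dots> = (\<theta> * (norm T * norm (bl_inv T))) * norm zF" by (simp add: algebra_simps)
  also have "\<dots> \<le> \<Theta> * norm zF" using cb by (rule mult_right_mono) simp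
  finally show ?thesis using e by blast
qed



lemma frac_mono_aux:
  fixes a s t :: real
  assumes "a \<ge> 0" "s \<le> t" "t < 1"
  shows "a / (1 - s) \<le> a / (1 - t)"
  using assms by (intro divide_left_mono) auto

lemma step_lemma:
  fixes A D :: "'a::{real_inner,complete_space} \<Rightarrow>\<^sub>L 'b::{real_inner,complete_space}"
    and B P :: "'a \<Rightarrow>\<^sub>L 'a" and h S rr :: 'a and Fx y0 :: 'b
  assumes Db: "\<forall>z. norm z \<le> \<beta> * norm (D z)" and b0: "\<beta> \<ge> 0"
    and orthD: "\<forall>v. inner (D v) y0 = 0"
    and AD: "norm (A - D) \<le> K * norm h" and K0: "K \<ge> 0"
    and tt: "\<beta> * K * norm h \<le> t0" and t01: "t0 < 1"
    and tay: "norm (Fx - y0 - A h) \<le> K / 2 * (norm h)^2"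
    and B: "bl_invertible B"
    and om1: "norm (bl_inv B o\<^sub>L bl_adj A o\<^sub>L A) \<le> \<omega>1"
    and om2: "norm ((bl_inv B o\<^sub>L bl_adj A o\<^sub>L A) - id_blinfun) \<le> \<omega>2" and om2l: "\<omega>2 < 1"
    and P: "bl_invertible P" and th0: "\<theta> \<ge> 0" and Th0: "\<Theta> \<ge> 0"
    and res: "norm (P rr) \<le> \<theta> * norm (P (bl_adj A Fx))"
    and cond: "ereal \<theta> * bl_cond (P o\<^sub>L bl_adj A o\<^sub>L A) \<le> ereal \<Theta>"
    and newton: "B S = - bl_adj A Fx + rr"
  shows "norm (h + S) \<le> (\<omega>2 + \<omega>1 * \<Theta>) * norm h
          + \<omega>1 * (1 + \<Theta>) * (\<beta> * \<beta> * K * norm h * norm y0 / (1 - t0) + \<beta> * K * (norm h)^2 / (2 * (1 - t0)))"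
proof -
  define e where "e = norm h"
  define \<delta> where "\<delta> = K * e"
  have d0: "\<delta> \<ge> 0" using K0 by (simp add: \<delta>_def e_def)
  have bd: "\<beta> * \<delta> \<le> t0" using tt by (simp add: \<delta>_def e_def mult.assoc)
  have bd1: "\<beta> * \<delta> < 1" using bd t01 by linarith
  have AD': "norm (A - D) \<le> \<delta>" using AD by (simp add: \<delta>_def e_def)
  have w1: "\<omega>1 \<ge> 0" using om1 norm_ge_zero order_trans by blast
  obtain z1 where z1: "bl_adj A (A z1) = bl_adj A y0" using solver[OF B om2 om2l] by blast
  have nz1: "norm z1 \<le> \<beta> * \<beta> * K * e * norm y0 / (1 - t0)"
  proof -
    have "norm z1 \<le> \<beta> * (\<beta> * \<delta> * norm y0) / (1 - \<beta> * \<delta>)"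
      by (rule L2[OF Db b0 AD' bd1 d0 normal_eq_orth[OF z1]]) (use orthD in blast)
    also have "\<dots> \<le> \<beta> * (\<beta> * \<delta> * norm y0) / (1 - t0)"
      by (rule frac_mono_aux[OF _ bd t01]) (use b0 d0 in simp)
    finally show ?thesis by (simp add: \<delta>_def mult_ac)
  qed
  define E where "E = Fx - y0 - A h"
  obtain z2 where z2: "bl_adj A (A z2) = bl_adj A E" using solver[OF B om2 om2l] by blast
  have nz2: "norm z2 \<le> \<beta> * K * e^2 / (2 * (1 - t0))"
  proof -
    have "norm z2 \<le> \<beta> * norm E / (1 - \<beta> * \<delta>)"
      by (rule L1[OF Db b0 AD' bd1 normal_eq_orth[OF z2]])
    also have "\<dots> \<le> \<beta> * norm E / (1 - t0)"
      by (rule frac_mono_aux[OF _ bd t01]) (use b0 in simp)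
    also have "\<dots> \<le> \<beta> * (K / 2 * e^2) / (1 - t0)"
      using tay b0 t01 by (intro divide_right_mono mult_left_mono) (simp_all add: E_def e_def)
    finally show ?thesis by simp
  qed
  define zF where "zF = h + z1 + z2"
  have zF: "bl_adj A (A zF) = bl_adj A Fx"
  proof -
    have "bl_adj A (A zF) = bl_adj A (A h) + bl_adj A (A z1) + bl_adj A (A z2)"
      by (simp add: zF_def blinfun.add_right)
    also have "\<dots> = bl_adj A (A h + y0 + E)" by (simp add: z1 z2 blinfun.add_right)
    also have "A h + y0 + E = Fx" by (simp add: E_def)
    finally show ?thesis .
  qed
  obtain zr where zr: "bl_adj A (A zr) = rr" "norm zr \<le> \<Theta> * norm zF"
    using resid_lemma[OF P th0 Th0 _ cond, of rr zF] res unfolding zF by blast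
  define M where "M = bl_inv B o\<^sub>L bl_adj A o\<^sub>L A"
  have Mapp: "M v = bl_inv B (bl_adj A (A v))" for v by (simp add: M_def)
  have "S = bl_inv B (B S)" by (simp add: bl_inv_apply(2)[OF B])
  also have "\<dots> = - M zF + M zr"
    by (simp add: newton Mapp zF zr blinfun.add_right blinfun.minus_right blinfun.diff_right)
  finally have Seq: "S = - M zF + M zr" .
  define a where "a = (M - id_blinfun) h"
  define b where "b = M (z1 + z2)"
  define c where "c = M zr"
  have "h + S = - (a + b) + c"
    by (simp add: a_def b_def c_def Seq zF_def blinfun.add_right blinfun.diff_left algebra_simps)
  hence "norm (h + S) \<le> norm (- (a + b)) + norm c" by (metis norm_triangle_ineq)
  also have "norm (- (a + b)) \<le> norm a + norm b" unfolding norm_minus_cancel by (rule norm_triangle_ineq)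
  finally have tri: "norm (h + S) \<le> norm a + norm b + norm c" by linarith
  have na: "norm a \<le> \<omega>2 * e"
  proof -
    have "norm a \<le> norm (M - id_blinfun) * norm h" unfolding a_def by (rule norm_blinfun)
    also have "\<dots> \<le> \<omega>2 * norm h" using om2 unfolding M_def[symmetric] by (rule mult_right_mono) simp
    finally show ?thesis by (simp add: e_def)
  qed
  have nb: "norm b \<le> \<omega>1 * (norm z1 + norm z2)"
  proof -
    have "norm b \<le> norm M * norm (z1 + z2)" unfolding b_def by (rule norm_blinfun)
    also have "\<dots> \<le> \<omega>1 * (norm z1 + norm z2)"
      by (rule mult_mono[OF _ norm_triangle_ineq]) (use om1 w1 in \<open>simp_all add: M_def\<close>)
    finally show ?thesis .
  qed
  have nzF: "norm zF \<le> e + norm z1 + norm z2"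
  proof -
    have "norm zF \<le> norm (h + z1) + norm z2" unfolding zF_def by (rule norm_triangle_ineq)
    also have "norm (h + z1) \<le> norm h + norm z1" by (rule norm_triangle_ineq)
    finally show ?thesis by (simp add: e_def)
  qed
  have nzr: "norm zr \<le> \<Theta> * (e + norm z1 + norm z2)"
    using zr(2) mult_left_mono[OF nzF Th0] by linarith
  have nc: "norm c \<le> \<omega>1 * (\<Theta> * (e + norm z1 + norm z2))"
  proof -
    have "norm c \<le> norm M * norm zr" unfolding c_def by (rule norm_blinfun)
    also have "\<dots> \<le> \<omega>1 * (\<Theta> * (e + norm z1 + norm z2))"
      by (rule mult_mono[OF _ nzr]) (use om1 w1 in \<open>simp_all add: M_def\<close>)
    finally show ?thesis .
  qed
  have "norm (h + S) \<le> \<omega>2 * e + \<omega>1 * (norm z1 + norm z2) + \<omega>1 * (\<Theta> * (e + norm z1 + norm z2))"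
    using tri na nb nc by linarith
  also have "\<dots> = (\<omega>2 + \<omega>1 * \<Theta>) * e + \<omega>1 * (1 + \<Theta>) * (norm z1 + norm z2)"
    by (simp add: algebra_simps)
  also have "\<dots> \<le> (\<omega>2 + \<omega>1 * \<Theta>) * e + \<omega>1 * (1 + \<Theta>) *
      (\<beta> * \<beta> * K * e * norm y0 / (1 - t0) + \<beta> * K * e^2 / (2 * (1 - t0)))"
  proof -
    have "norm z1 + norm z2 \<le> \<beta> * \<beta> * K * e * norm y0 / (1 - t0) + \<beta> * K * e^2 / (2 * (1 - t0))"
      using nz1 nz2 by linarith
    moreover have "\<omega>1 * (1 + \<Theta>) \<ge> 0" using w1 Th0 by simp
    ultimately show ?thesis by (simp add: mult_left_mono)
  qed
  finally show ?thesis by (simp add: e_def)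
qed



lemma taylor_bound:
  fixes F :: "'a::real_normed_vector \<Rightarrow> 'b::real_normed_vector" and F' :: "'a \<Rightarrow> ('a \<Rightarrow>\<^sub>L 'b)"
  assumes deriv: "\<forall>y\<in>U. (F has_derivative blinfun_apply (F' y)) (at y)"
    and lip: "\<forall>y\<in>U. \<forall>z\<in>U. norm (F' y - F' z) \<le> K * norm (y - z)"
    and seg: "\<forall>s\<in>{0..1}. xs + s *\<^sub>R h \<in> U"
    and K0: "K \<ge> 0"
  shows "norm (F (xs + h) - F xs - F' (xs + h) h) \<le> K / 2 * (norm h)^2"
proof -
  define f where "f s = F (xs + s *\<^sub>R h) - s *\<^sub>R F' (xs + h) h" for s :: real
  define f' where "f' s = F' (xs + s *\<^sub>R h) h - F' (xs + h) h" for s :: real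
  define \<phi> where "\<phi> s = K * (norm h)^2 * (s - s^2 / 2)" for s :: real
  define \<phi>' where "\<phi>' s = K * (norm h)^2 * (1 - s)" for s :: real
  have fd: "(f has_vector_derivative f' s) (at s)" if "s \<in> {0..1}" for s
  proof -
    have inU: "xs + s *\<^sub>R h \<in> U" using seg that by blast
    have d1: "((\<lambda>s. xs + s *\<^sub>R h) has_derivative (\<lambda>u. u *\<^sub>R h)) (at s)"
      by (auto intro!: derivative_eq_intros)
    have d2: "(F has_derivative blinfun_apply (F' (xs + s *\<^sub>R h))) (at (xs + s *\<^sub>R h))"
      using deriv inU by blast
    have d3: "((\<lambda>s. F (xs + s *\<^sub>R h)) has_derivative (\<lambda>u. F' (xs + s *\<^sub>R h) (u *\<^sub>R h))) (at s)"
      using has_derivative_compose[OF d1 d2] by (simp add: o_def)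
    have d4: "((\<lambda>s. s *\<^sub>R F' (xs + h) h) has_derivative (\<lambda>u. u *\<^sub>R F' (xs + h) h)) (at s)"
      by (auto intro!: derivative_eq_intros)
    have "(f has_derivative (\<lambda>u. F' (xs + s *\<^sub>R h) (u *\<^sub>R h) - u *\<^sub>R F' (xs + h) h)) (at s)"
      unfolding f_def by (rule has_derivative_diff[OF d3 d4])
    moreover have "(\<lambda>u. F' (xs + s *\<^sub>R h) (u *\<^sub>R h) - u *\<^sub>R F' (xs + h) h) = (\<lambda>u. u *\<^sub>R f' s)"
      by (simp add: f'_def fun_eq_iff blinfun.scaleR_right scaleR_diff_right)
    ultimately show ?thesis by (simp add: has_vector_derivative_def)
  qed
  have \<phi>d: "(\<phi> has_vector_derivative \<phi>' s) (at s)" for s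
  proof -
    have "(\<phi> has_real_derivative K * (norm h)^2 * (1 - 2 * s / 2)) (at s)"
      unfolding \<phi>_def by (auto intro!: derivative_eq_intros)
    thus ?thesis by (simp add: \<phi>'_def has_real_derivative_iff_has_vector_derivative)
  qed
  have fc: "continuous_on {0..1} f"
    using fd by (meson continuous_at_imp_continuous_on has_vector_derivative_continuous)
  have \<phi>c: "continuous_on {0..1} \<phi>"
    using \<phi>d by (meson continuous_at_imp_continuous_on has_vector_derivative_continuous)
  have bnd: "norm (f' s) \<le> \<phi>' s" if "0 < s" "s < 1" for s
  proof -
    have "norm (f' s) = norm ((F' (xs + s *\<^sub>R h) - F' (xs + h)) h)"
      by (simp add: f'_def blinfun.diff_left)
    also have "\<dots> \<le> norm (F' (xs + s *\<^sub>R h) - F' (xs + h)) * norm h" by (rule norm_blinfun)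
    also have "norm (F' (xs + s *\<^sub>R h) - F' (xs + h)) \<le> K * norm ((xs + s *\<^sub>R h) - (xs + h))"
      using lip seg that by (metis atLeastAtMost_iff less_eq_real_def scaleR_one zero_le_one order_refl)
    also have "norm ((xs + s *\<^sub>R h) - (xs + h)) = (1 - s) * norm h"
    proof -
      have "(xs + s *\<^sub>R h) - (xs + h) = - ((1 - s) *\<^sub>R h)" by (simp add: algebra_simps)
      thus ?thesis using that by simp
    qed
    finally show ?thesis
      by (simp add: \<phi>'_def power2_eq_square mult_right_mono algebra_simps)
  qed
  have "norm (f 1 - f 0) \<le> \<phi> 1 - \<phi> 0"
    by (rule differentiable_bound_general[OF zero_less_one fc \<phi>c, of f' \<phi>'])
       (use fd \<phi>d bnd in auto)
  thus ?thesis by (simp add: f_def \<phi>_def algebra_simps)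
qed



theorem mainTheorem11:
  fixes F :: "'a::{real_inner, complete_space} \<Rightarrow> 'b::{real_inner, complete_space}"
    and F' :: "'a \<Rightarrow> ('a \<Rightarrow>\<^sub>L 'b)"
    and \<Omega> :: "'a set"
    and xs :: 'a and R K \<Theta> \<omega>1 \<omega>2 :: real
    and x S r :: "nat \<Rightarrow> 'a"
    and B P :: "nat \<Rightarrow> ('a \<Rightarrow>\<^sub>L 'a)"
    and \<theta> :: "nat \<Rightarrow> real"
  assumes open_\<Omega>: "open \<Omega>"
    and deriv: "\<forall>y\<in>\<Omega>. (F has_derivative blinfun_apply (F' y)) (at y)"
    and cont_deriv: "continuous_on \<Omega> F'"
    and closed_img: "\<forall>y\<in>\<Omega>. closed (range (blinfun_apply (F' y)))"
    and xs_in: "xs \<in> \<Omega>"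
    and R_pos: "R > 0"
    and crit: "bl_adj (F' xs) (F xs) = 0"
    and inj: "inj (blinfun_apply (F' xs))"
    and K_pos: "K > 0"
    and alpha_lt: "sqrt 2 * norm (F xs) * (norm (bl_pinv (F' xs)))\<^sup>2 * K < 1"
    and lip: "\<forall>y\<in>ball xs (Sup {t. 0 \<le> t \<and> t < R \<and> ball xs t \<subseteq> \<Omega>}).
              \<forall>z\<in>ball xs (Sup {t. 0 \<le> t \<and> t < R \<and> ball xs t \<subseteq> \<Omega>}).
                norm (F' y - F' z) \<le> K * norm (y - z)"
    and theta_bnd: "0 \<le> \<Theta>" "\<Theta> < 1"
    and omega_bnd: "0 \<le> \<omega>2" "\<omega>2 < \<omega>1"
    and omega_cond: "\<omega>1 * (sqrt 2 * norm (F xs) * (norm (bl_pinv (F' xs)))\<^sup>2 * K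
                        + sqrt 2 * norm (F xs) * (norm (bl_pinv (F' xs)))\<^sup>2 * K * \<Theta> + \<Theta>) + \<omega>2 < 1"
    and x0: "x 0 \<in> ball xs (min (Sup {t. 0 \<le> t \<and> t < R \<and> ball xs t \<subseteq> \<Omega>})
               ((2 * (1 - \<omega>1 * \<Theta> - \<omega>2) - 2 * sqrt 2 * norm (F xs) * K * (norm (bl_pinv (F' xs)))\<^sup>2 * \<omega>1 * (1 + \<Theta>))
                / (norm (bl_pinv (F' xs)) * K * (2 + \<omega>1 - \<Theta> * \<omega>1 - 2 * \<omega>2))))"
    and x0_ne: "x 0 \<noteq> xs"
    and step: "\<forall>k. x (Suc k) = x k + S k"
    and newton: "\<forall>k. B k (S k) = - bl_adj (F' (x k)) (F (x k)) + r k"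
    and B_inv: "\<forall>k. bl_invertible (B k)"
    and B_om1: "\<forall>k. norm (bl_inv (B k) o\<^sub>L bl_adj (F' (x k)) o\<^sub>L F' (x k)) \<le> \<omega>1"
    and B_om2: "\<forall>k. norm ((bl_inv (B k) o\<^sub>L bl_adj (F' (x k)) o\<^sub>L F' (x k)) - id_blinfun) \<le> \<omega>2"
    and P_inv: "\<forall>k. bl_invertible (P k)"
    and theta_nn: "\<forall>k. \<theta> k \<ge> 0"
    and resid: "\<forall>k. norm (P k (r k)) \<le> \<theta> k * norm (P k (bl_adj (F' (x k)) (F (x k))))"
    and cond_bnd: "\<forall>k. ereal (\<theta> k) * bl_cond (P k o\<^sub>L bl_adj (F' (x k)) o\<^sub>L F' (x k)) \<le> ereal \<Theta>"
  shows "(\<forall>k. x k \<in> ball xs (min (Sup {t. 0 \<le> t \<and> t < R \<and> ball xs t \<subseteq> \<Omega>})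
               ((2 * (1 - \<omega>1 * \<Theta> - \<omega>2) - 2 * sqrt 2 * norm (F xs) * K * (norm (bl_pinv (F' xs)))\<^sup>2 * \<omega>1 * (1 + \<Theta>))
                / (norm (bl_pinv (F' xs)) * K * (2 + \<omega>1 - \<Theta> * \<omega>1 - 2 * \<omega>2)))))
       \<and> x \<longlonglongrightarrow> xs
       \<and> (\<forall>k. norm (x (Suc k) - xs) \<le>
             (1 + \<Theta>) * norm (bl_pinv (F' xs)) * \<omega>1 * K
               / (2 * (1 - norm (bl_pinv (F' xs)) * K * norm (x 0 - xs))) * (norm (x k - xs))\<^sup>2
           + ((1 + \<Theta>) * \<omega>1 * sqrt 2 * norm (F xs) * (norm (bl_pinv (F' xs)))\<^sup>2 * K
                / (1 - norm (bl_pinv (F' xs)) * K * norm (x 0 - xs))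
              + \<omega>1 * \<Theta> + \<omega>2) * norm (x k - xs))"
proof -
  define Sset where "Sset = {t. 0 \<le> t \<and> t < R \<and> ball xs t \<subseteq> \<Omega>}"
  obtain \<kappa> where kd: "\<kappa> = Sup {t. 0 \<le> t \<and> t < R \<and> ball xs t \<subseteq> \<Omega>}" by blast
  obtain D where Dd: "D = F' xs" by blast
  obtain \<beta> where bd: "\<beta> = norm (bl_pinv (F' xs))" by blast
  obtain c where cd: "c = norm (F xs)" by blast
  obtain \<alpha> where ad: "\<alpha> = sqrt 2 * c * \<beta>\<^sup>2 * K" by blast
  obtain \<rho> where rd: "\<rho> = (2 * (1 - \<omega>1 * \<Theta> - \<omega>2) - 2 * sqrt 2 * norm (F xs) * K * (norm (bl_pinv (F' xs)))\<^sup>2 * \<omega>1 * (1 + \<Theta>))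
                / (norm (bl_pinv (F' xs)) * K * (2 + \<omega>1 - \<Theta> * \<omega>1 - 2 * \<omega>2))" by blast
  have kS: "\<kappa> = Sup Sset" using kd Sset_def by simp
  have S0: "0 \<in> Sset" by (simp add: Sset_def R_pos less_imp_le)
  have Sbdd: "bdd_above Sset" by (rule bdd_aboveI[of _ R]) (auto simp: Sset_def)
  have kpos: "\<kappa> > 0"
  proof -
    obtain \<epsilon> where e: "\<epsilon> > 0" "ball xs \<epsilon> \<subseteq> \<Omega>" using open_\<Omega> xs_in open_contains_ball by blast
    have "min \<epsilon> (R/2) \<in> Sset" using e R_pos by (auto simp: Sset_def)
    hence "min \<epsilon> (R/2) \<le> \<kappa>" using Sbdd kS by (simp add: cSup_upper)
    thus ?thesis using e R_pos by linarith
  qed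
  have kball: "ball xs \<kappa> \<subseteq> \<Omega>"
  proof
    fix y assume "y \<in> ball xs \<kappa>"
    hence "dist xs y < Sup Sset" using kS by simp
    then obtain t where "t \<in> Sset" "dist xs y < t" using less_cSupD[OF _ ] S0 by blast
    thus "y \<in> \<Omega>" by (auto simp: Sset_def)
  qed
  have lipk: "\<forall>y\<in>ball xs \<kappa>. \<forall>z\<in>ball xs \<kappa>. norm (F' y - F' z) \<le> K * norm (y - z)"
    using lip kd by simp
  have derivk: "\<forall>y\<in>ball xs \<kappa>. (F has_derivative blinfun_apply (F' y)) (at y)"
    using deriv kball by blast
  have Dinv: "bl_invertible (bl_adj D o\<^sub>L D)"
    using adj_comp_invertible[of D] inj closed_img xs_in Dd by simp
  have Db: "\<forall>z. norm z \<le> \<beta> * norm (D z)"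
  proof
    fix z
    have "bl_pinv D (D z) = z"
      by (simp add: bl_pinv_def bl_inv_apply(2)[OF Dinv, simplified])
    hence "norm z = norm (bl_pinv D (D z))" by simp
    also have "\<dots> \<le> norm (bl_pinv D) * norm (D z)" by (rule norm_blinfun)
    finally show "norm z \<le> \<beta> * norm (D z)" using bd Dd by simp
  qed
  have b0: "\<beta> \<ge> 0" using bd by simp
  have orthD: "\<forall>v. inner (D v) (F xs) = 0"
  proof
    fix v
    have "inner (D v) (F xs) = inner v (bl_adj D (F xs))" by (rule bl_adj_inner)
    thus "inner (D v) (F xs) = 0" using crit Dd by simp
  qed
  define e0 where "e0 = norm (x 0 - xs)"
  have e0k: "e0 < \<kappa>" and e0r: "e0 < \<rho>"
    using x0 kd rd by (simp_all add: e0_def dist_norm norm_minus_commute)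
  have e0pos: "e0 > 0" using x0_ne by (simp add: e0_def)
  have bpos: "\<beta> > 0"
  proof -
    have "e0 \<le> \<beta> * norm (D (x 0 - xs))" using Db by (simp add: e0_def)
    thus ?thesis using e0pos b0 by (cases "\<beta> = 0") auto
  qed
  have w1: "\<omega>1 > 0" using omega_bnd by linarith
  have a0: "\<alpha> \<ge> 0" using ad cd K_pos by simp
  have oc: "\<omega>1 * (\<alpha> + \<alpha> * \<Theta> + \<Theta>) + \<omega>2 < 1" using omega_cond ad cd bd by simp
  define N where "N = 2 * (1 - \<omega>1 * \<Theta> - \<omega>2) - 2 * \<alpha> * \<omega>1 * (1 + \<Theta>)"
  define Dn where "Dn = 2 + \<omega>1 - \<Theta> * \<omega>1 - 2 * \<omega>2"
  have Npos: "N > 0" using oc by (simp add: N_def algebra_simps)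
  have w2l: "\<omega>2 < 1"
  proof -
    have "\<omega>1 * (\<alpha> + \<alpha> * \<Theta> + \<Theta>) \<ge> 0" using w1 a0 theta_bnd by simp
    thus ?thesis using oc by linarith
  qed
  have Dnpos: "Dn > 0"
  proof -
    have "\<Theta> * \<omega>1 < \<omega>1" using theta_bnd w1 by simp
    thus ?thesis using w2l by (simp add: Dn_def)
  qed
  have rho_eq: "\<rho> = N / (\<beta> * K * Dn)"
    using rd ad cd bd by (simp add: N_def Dn_def mult_ac)
  define t0 where "t0 = \<beta> * K * e0"
  have t0pos: "t0 > 0" using bpos K_pos e0pos by (simp add: t0_def)
  have t0N: "t0 * Dn < N"
  proof -
    have "e0 < N / (\<beta> * K * Dn)" using e0r rho_eq by simp
    hence "e0 * (\<beta> * K * Dn) < N" using bpos K_pos Dnpos by (simp add: pos_less_divide_eq)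
    thus ?thesis by (simp add: t0_def mult_ac)
  qed
  have NDn: "N < Dn"
  proof -
    have p1: "\<alpha> * \<omega>1 * (1 + \<Theta>) \<ge> 0" using a0 w1 theta_bnd by simp
    have p2: "\<Theta> * \<omega>1 \<ge> 0" using w1 theta_bnd by simp
    have "Dn - N = \<omega>1 + \<Theta> * \<omega>1 + 2 * (\<alpha> * \<omega>1 * (1 + \<Theta>))"
      by (simp add: N_def Dn_def algebra_simps)
    thus ?thesis using p1 p2 w1 by linarith
  qed
  have t01: "t0 < 1"
  proof -
    have "t0 * Dn < 1 * Dn" using t0N NDn by simp
    thus ?thesis using Dnpos by (simp only: mult_less_cancel_right)
  qed
  define q where "q = (1 + \<Theta>) * \<beta> * \<omega>1 * K * e0 / (2 * (1 - t0)) + (1 + \<Theta>) * \<omega>1 * \<alpha> / (1 - t0) + \<omega>1 * \<Theta> + \<omega>2"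
  have q0: "q \<ge> 0" using theta_bnd bpos w1 K_pos e0pos t01 a0 omega_bnd by (simp add: q_def)
  have q1: "q < 1"
  proof -
    have key: "(1 - \<omega>1 * \<Theta> - \<omega>2) * (1 - t0) - (1 + \<Theta>) * \<omega>1 * t0 / 2 - (1 + \<Theta>) * \<omega>1 * \<alpha>
               = N / 2 - t0 * Dn / 2"
      by (simp add: N_def Dn_def field_simps)
    have "(1 + \<Theta>) * \<omega>1 * t0 / 2 + (1 + \<Theta>) * \<omega>1 * \<alpha> < (1 - \<omega>1 * \<Theta> - \<omega>2) * (1 - t0)"
      using key t0N by linarith
    hence "((1 + \<Theta>) * \<omega>1 * t0 / 2 + (1 + \<Theta>) * \<omega>1 * \<alpha>) / (1 - t0) < 1 - \<omega>1 * \<Theta> - \<omega>2"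
      using t01 by (simp add: pos_divide_less_eq)
    moreover have "q = ((1 + \<Theta>) * \<omega>1 * t0 / 2) / (1 - t0) + ((1 + \<Theta>) * \<omega>1 * \<alpha>) / (1 - t0) + \<omega>1 * \<Theta> + \<omega>2"
      unfolding q_def t0_def by (simp add: divide_divide_eq_left mult_ac)
    hence "q = ((1 + \<Theta>) * \<omega>1 * t0 / 2 + (1 + \<Theta>) * \<omega>1 * \<alpha>) / (1 - t0) + \<omega>1 * \<Theta> + \<omega>2"
      by (simp add: add_divide_distrib)
    ultimately show ?thesis by linarith
  qed
  define RHS where "RHS e = (1 + \<Theta>) * \<beta> * \<omega>1 * K / (2 * (1 - t0)) * e\<^sup>2
           + ((1 + \<Theta>) * \<omega>1 * sqrt 2 * c * \<beta>\<^sup>2 * K / (1 - t0) + \<omega>1 * \<Theta> + \<omega>2) * e" for e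
  have step: "norm (x (Suc k) - xs) \<le> RHS (norm (x k - xs))" if ek: "norm (x k - xs) \<le> e0" for k
  proof -
    define h where "h = x k - xs"
    have xk: "x k = xs + h" by (simp add: h_def)
    have xkb: "x k \<in> ball xs \<kappa>" using ek e0k by (simp add: dist_norm norm_minus_commute)
    have xsb: "xs \<in> ball xs \<kappa>" using kpos by simp
    have AD: "norm (F' (x k) - D) \<le> K * norm h"
      using lipk xkb xsb Dd by (simp add: h_def)
    have tt: "\<beta> * K * norm h \<le> t0"
      using ek bpos K_pos by (simp add: t0_def h_def mult_left_mono)
    have seg: "\<forall>s\<in>{0..1}. xs + s *\<^sub>R h \<in> ball xs \<kappa>"
    proof
      fix s :: real assume "s \<in> {0..1}"
      hence "norm (s *\<^sub>R h) \<le> norm h" by (simp add: mult_left_le_one_le)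
      thus "xs + s *\<^sub>R h \<in> ball xs \<kappa>" using ek e0k by (simp add: dist_norm h_def)
    qed
    have tay: "norm (F (x k) - F xs - F' (x k) h) \<le> K / 2 * (norm h)\<^sup>2"
      using taylor_bound[OF derivk lipk seg] K_pos xk by simp
    have sl: "norm (h + S k) \<le> (\<omega>2 + \<omega>1 * \<Theta>) * norm h
          + \<omega>1 * (1 + \<Theta>) * (\<beta> * \<beta> * K * norm h * norm (F xs) / (1 - t0) + \<beta> * K * (norm h)^2 / (2 * (1 - t0)))"
      by (rule step_lemma[OF Db b0 orthD AD less_imp_le[OF K_pos] tt t01 tay B_inv[rule_format] B_om1[rule_format]
           B_om2[rule_format] w2l P_inv[rule_format] theta_nn[rule_format] theta_bnd(1) resid[rule_format]
           cond_bnd[rule_format] newton[rule_format]])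
    have "x (Suc k) - xs = h + S k" using step by (simp add: h_def)
    hence "norm (x (Suc k) - xs) \<le> (\<omega>2 + \<omega>1 * \<Theta>) * norm h
          + \<omega>1 * (1 + \<Theta>) * (\<beta> * \<beta> * K * norm h * c / (1 - t0) + \<beta> * K * (norm h)^2 / (2 * (1 - t0)))"
      using sl cd by simp
    also have "\<dots> \<le> RHS (norm h)"
    proof -
      define X where "X = \<beta> * \<beta> * K * norm h * c / (1 - t0)"
      have X0: "X \<ge> 0" using bpos K_pos t01 by (simp add: X_def cd)
      have s1: "1 \<le> sqrt (2::real)" by simp
      have "1 * X \<le> sqrt 2 * X" by (rule mult_right_mono[OF s1 X0])
      hence "\<omega>1 * (1 + \<Theta>) * (X + \<beta> * K * (norm h)^2 / (2 * (1 - t0)))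
           \<le> \<omega>1 * (1 + \<Theta>) * (sqrt 2 * X + \<beta> * K * (norm h)^2 / (2 * (1 - t0)))"
        using w1 theta_bnd by (intro mult_left_mono) simp_all
      moreover have "(\<omega>2 + \<omega>1 * \<Theta>) * norm h + \<omega>1 * (1 + \<Theta>) * (sqrt 2 * X + \<beta> * K * (norm h)^2 / (2 * (1 - t0)))
          = RHS (norm h)"
      proof -
        obtain d where dd: "d = 1 - t0" by blast
        have d0: "d \<noteq> 0" using t01 dd by simp
        show ?thesis unfolding RHS_def X_def dd[symmetric] using d0
          by (simp add: field_simps power2_eq_square)
      qed
      ultimately show ?thesis by (simp add: X_def)
    qed
    finally show ?thesis by (simp add: h_def)
  qed
  have rq: "RHS e \<le> q * e" if "0 \<le> e" "e \<le> e0" for e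
  proof -
    define A1 where "A1 = (1 + \<Theta>) * \<beta> * \<omega>1 * K / (2 * (1 - t0))"
    define A2 where "A2 = (1 + \<Theta>) * \<omega>1 * sqrt 2 * c * \<beta>\<^sup>2 * K / (1 - t0) + \<omega>1 * \<Theta> + \<omega>2"
    have A10: "A1 \<ge> 0" using theta_bnd bpos w1 K_pos t01 by (simp add: A1_def)
    have R: "RHS e = e * (A1 * e + A2)" by (simp add: RHS_def A1_def A2_def power2_eq_square algebra_simps)
    have Q: "q = A1 * e0 + A2" using ad by (simp add: q_def A1_def A2_def mult_ac)
    have "A1 * e + A2 \<le> A1 * e0 + A2" using A10 that by (simp add: mult_left_mono)
    hence "e * (A1 * e + A2) \<le> e * (A1 * e0 + A2)" using that by (simp add: mult_left_mono)
    thus ?thesis using R Q by (simp add: mult.commute)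
  qed
  have ind: "norm (x k - xs) \<le> q^k * e0" for k
  proof (induction k)
    case 0 thus ?case by (simp add: e0_def)
  next
    case (Suc k)
    have qk: "q^k \<le> 1" using q0 q1 by (simp add: power_le_one)
    hence "q^k * e0 \<le> e0" using e0pos by (simp add: mult_left_le_one_le)
    hence ek: "norm (x k - xs) \<le> e0" using Suc.IH by linarith
    have "norm (x (Suc k) - xs) \<le> RHS (norm (x k - xs))" by (rule step[OF ek])
    also have "\<dots> \<le> q * norm (x k - xs)" by (rule rq[OF norm_ge_zero ek])
    also have "\<dots> \<le> q * (q^k * e0)" using Suc.IH q0 by (rule mult_left_mono)
    finally show ?case by simp
  qed
  have eke0: "norm (x k - xs) \<le> e0" for k
  proof -
    have "q^k \<le> 1" using q0 q1 by (simp add: power_le_one)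
    hence "q^k * e0 \<le> e0" using e0pos by (simp add: mult_left_le_one_le)
    thus ?thesis using ind[of k] by linarith
  qed
  have C1: "\<forall>k. x k \<in> ball xs (min \<kappa> \<rho>)"
    using eke0 e0k e0r by (auto simp: dist_norm norm_minus_commute intro: le_less_trans)
  have C2: "x \<longlonglongrightarrow> xs"
  proof -
    have "(\<lambda>k. x k - xs) \<longlonglongrightarrow> 0"
    proof (rule Lim_null_comparison)
      show "\<forall>\<^sub>F k in sequentially. norm (x k - xs) \<le> q^k * e0" using ind by simp
      show "(\<lambda>k. q^k * e0) \<longlonglongrightarrow> 0"
        by (intro tendsto_mult_left_zero LIMSEQ_power_zero) (use q0 q1 in simp)
    qed
    thus ?thesis by (simp add: LIM_zero_iff)
  qed
  have C3: "\<forall>k. norm (x (Suc k) - xs) \<le> RHS (norm (x k - xs))"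
    using step eke0 by blast
  show ?thesis
    using C1 C2 C3 unfolding RHS_def t0_def e0_def kd rd bd cd by simp
qed


end
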